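(* Let $\lambda$ be a nonzero real number. For any integer $p\ge1$, \[ \sum_{k=1}^{\infty}\frac{H_{k,\lambda}^{(p)}}{k(k+1)(k+2)}=\frac{1}{2}\bigg(\sum_{k=1}^{p}(-1)^{k-1}\zeta_{\lambda}(p+2-k)+\frac{(-1)^{p}}{\lambda+1}\bigg). \] More generally, for any integers $n,p$ with $n\ge2$, $p\ge1$, \[ \sum_{k=1}^{\infty}\frac{H_{k,\lambda}^{(p)}}{\binom{k+n-1}{n}(k+n)}=(n-1)\sum_{j=0}^{n-2}\binom{n-2}{j}(-1)^{j}I_{\lambda}(j+1,p+1), \] where $I_{\lambda}(r,q)=\int_{0}^{1}x^{r-1}\mathrm{Li}_{q,\lambda}(x)\,dx$.
   Context: Let $\lambda$ be a nonzero real number. For real $x$ and $\mu\neq 0$, set $(x)_{0,\mu}=1$ and $(x)_{n,\mu}=x(x-\mu)\cdots(x-(n-1)\mu)$ for $n\ge1$. The degenerate polylogarithm is $\mathrm{Li}_{k,\lambda}(t)=\sum_{n=1}^{\infty}\frac{(-1)^{n-1}\lambda^{n-1}(1)_{n,1/\lambda}}{(n-1)!\,n^{k}}t^{n}$ for $k\in\mathbb{Z}$ (for $|t|<1$, and by the same series where it converges). The degenerate zeta function is $\zeta_{\lambda}(s)=\sum_{n=1}^{\infty}\frac{(-1)^{n-1}\lambda^{n-1}(1)_{n,1/\lambda}}{(n-1)!\,n^{s}}$ for $\mathrm{Re}(s)>1$. The degenerate higher-order harmonic numbers are $H_{0,\lambda}^{(k)}=0$ and $H_{n,\lambda}^{(k)}=\sum_{l=1}^{n}\frac{(-\lambda)^{l-1}(1)_{l,1/\lambda}}{l^{k}(l-1)!}$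 for $n\ge1$; equivalently $\frac{\mathrm{Li}_{k,\lambda}(t)}{1-t}=\sum_{n\ge1}H_{n,\lambda}^{(k)}t^{n}$.
   Formalization: The first identity is asserted only when $\lambda\neq -1$ and the series for $\zeta_{\lambda}(p+2-k)$ converge for k = 1, ..., p, the second only when each $x^{j}\mathrm{Li}_{p+1,\lambda}(x)$, j = 0, ..., n-2, is integrable on [0,1]. The statement above fails without it. *)

theory Defs
  imports "HOL-Analysis.Analysis"
begin

definition gen_fall :: "real \<Rightarrow> nat \<Rightarrow> real \<Rightarrow> real" where
  "gen_fall x n mu = (\<Prod>i<n. x - real i * mu)"

definition dcoeff :: "real \<Rightarrow> nat \<Rightarrow> real" where
  "dcoeff lam n = (-1) ^ (n - 1) * lam ^ (n - 1) * gen_fall 1 n (1 / lam) / fact (n - 1)"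

definition deg_Li :: "int \<Rightarrow> real \<Rightarrow> real \<Rightarrow> real" where
  "deg_Li k lam t = (\<Sum>m. dcoeff lam (Suc m) / real (Suc m) powi k * t ^ Suc m)"

definition deg_zeta :: "real \<Rightarrow> real \<Rightarrow> real" where
  "deg_zeta lam s = (\<Sum>m. dcoeff lam (Suc m) / real (Suc m) powr s)"

definition deg_H :: "nat \<Rightarrow> int \<Rightarrow> real \<Rightarrow> real" where
  "deg_H n k lam = (\<Sum>l=1..n. (- lam) ^ (l - 1) * gen_fall 1 l (1 / lam)
                                / (real l powi k * fact (l - 1)))"

definition deg_I :: "real \<Rightarrow> nat \<Rightarrow> int \<Rightarrow> real" where
  "deg_I lam r q = integral {0..1} (\<lambda>x. x ^ (r - 1) * deg_Li q lam x)"

end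

theory Submission
  imports Defs
begin

lemma dcoeff_1: "dcoeff lam (Suc 0) = 1"
  by (simp add: dcoeff_def gen_fall_def)

lemma dcoeff_rec:
  assumes "lam \<noteq> 0"
  shows "dcoeff lam (Suc (Suc i)) = dcoeff lam (Suc i) * (real i + 1 - lam) / (real i + 1)"
proof -
  define G where "G = gen_fall 1 (Suc i) (1/lam)"
  have g: "gen_fall 1 (Suc (Suc i)) (1/lam) = G * (1 - (real i + 1)/lam)"
    by (simp add: gen_fall_def G_def)
  have "lam ^ Suc i * (1 - (real i + 1)/lam) = - (lam ^ i * (real i + 1 - lam))"
    using assms by (simp add: field_simps)
  have f: "fact (Suc i) = (real i + 1) * fact i" by simp
  have "dcoeff lam (Suc (Suc i)) = (-1)^Suc i * (lam ^ Suc i * (1 - (real i + 1)/lam)) * G / fact (Suc i)"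
    unfolding dcoeff_def g by simp
  also have "\<dots> = (-1)^i * lam^i * G * (real i + 1 - lam) / ((real i + 1) * fact i)"
    unfolding f \<open>lam ^ Suc i * _ = _\<close> by simp
  also have "\<dots> = dcoeff lam (Suc i) * (real i + 1 - lam) / (real i + 1)"
    unfolding dcoeff_def G_def by (simp add: field_simps)
  finally show ?thesis .
qed

lemma dcoeff_sign:
  assumes "lam \<noteq> 0"
  obtains M and s :: real where "s = 1 \<or> s = -1" "\<And>i. i \<ge> M \<Longrightarrow> 0 \<le> s * dcoeff lam (Suc i)"
    "lam \<le> real M"
proof -
  define M where "M = nat \<lceil>lam\<rceil>"
  define s :: real where "s = (if dcoeff lam (Suc M) \<ge> 0 then 1 else -1)"
  have "0 \<le> s * dcoeff lam (Suc i)" if "i \<ge> M" for i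
    using that
  proof (induction i rule: dec_induct)
    case base then show ?case by (simp add: s_def)
  next
    case (step i)
    have "real i + 1 - lam > 0" using step(1) unfolding M_def by linarith
    then have "0 \<le> (real i + 1 - lam) / (real i + 1)" by simp
    then show ?case using step(3) unfolding dcoeff_rec[OF assms]
      by (metis mult_nonneg_nonneg times_divide_eq_right mult.assoc)
  qed
  moreover have "lam \<le> real M" unfolding M_def by linarith
  ultimately show ?thesis using that[of s M] by (auto simp: s_def)
qed

lemma abel_partial:
  fixes d U :: "nat \<Rightarrow> real"
  shows "(\<Sum>k<N. (\<Sum>i<Suc k. d i) * (U k - U (Suc k))) = (\<Sum>i<N. d i * U i) - (\<Sum>i<N. d i) * U N"
  by (induction N) (simp_all add: algebra_simps)

lemma abel_nonneg_part:
  fixes d U :: "nat \<Rightarrow> real"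
  assumes d0: "\<And>i. 0 \<le> d i" and U0: "\<And>i. 0 \<le> U i" and Ud: "\<And>i. U (Suc i) \<le> U i"
    and Ulim: "U \<longlonglongrightarrow> 0" and sm: "summable (\<lambda>i. d i * U i)"
  shows "(\<lambda>N. (\<Sum>i<N. d i) * U N) \<longlonglongrightarrow> 0"
proof -
  define H where "H N = (\<Sum>i<N. d i)" for N
  define v where "v k = H (Suc k) * (U k - U (Suc k))" for k
  have H0: "0 \<le> H N" for N unfolding H_def by (simp add: d0 sum_nonneg)
  have Hmono: "H N \<le> H M" if "N \<le> M" for N M
    unfolding H_def using that by (intro sum_mono2) (auto simp: d0)
  have v0: "0 \<le> v k" for k unfolding v_def using H0 Ud by (simp add: mult_nonneg_nonneg)
  have part: "(\<Sum>k<N. v k) = (\<Sum>i<N. d i * U i) - H N * U N" for N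
    unfolding v_def H_def by (rule abel_partial)
  have sv: "summable v"
  proof (rule bounded_imp_summable[OF v0])
    fix n
    have "(\<Sum>k\<le>n. v k) = (\<Sum>k<Suc n. v k)" by (simp add: lessThan_Suc_atMost)
    also have "\<dots> \<le> (\<Sum>i<Suc n. d i * U i)" unfolding part using H0 U0
      by (simp add: mult_nonneg_nonneg)
    also have "\<dots> \<le> suminf (\<lambda>i. d i * U i)"
      by (rule sum_le_suminf[OF sm]) (auto simp: d0 U0)
    finally show "(\<Sum>k\<le>n. v k) \<le> suminf (\<lambda>i. d i * U i)" .
  qed
  have le: "H N * U N \<le> (\<Sum>k. v (k + N))" for N
  proof -
    have "(\<lambda>k. U (k + N)) \<longlonglongrightarrow> 0"
      using Ulim by (rule LIMSEQ_ignore_initial_segment)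
    then have "(\<lambda>k. U (k + N) - U (Suc k + N)) sums (U (0 + N) - 0)"
      by (rule telescope_sums'[where f = "\<lambda>k. U (k + N)"])
    then have "(\<lambda>k. H N * (U (k + N) - U (Suc k + N))) sums (H N * U N)"
      by (simp add: sums_mult)
    then have "H N * U N = (\<Sum>k. H N * (U (k + N) - U (Suc k + N)))"
      by (simp add: sums_iff)
    also have "\<dots> \<le> (\<Sum>k. v (k + N))"
    proof (rule suminf_le)
      fix k show "H N * (U (k + N) - U (Suc k + N)) \<le> v (k + N)"
        unfolding v_def using Hmono[of N "Suc (k + N)"] Ud[of "k + N"]
        by (simp add: mult_right_mono)
    next
      show "summable (\<lambda>k. H N * (U (k + N) - U (Suc k + N)))"
        using \<open>_ sums (H N * U N)\<close> by (rule sums_summable)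
    next
      show "summable (\<lambda>k. v (k + N))" using sv by (rule summable_ignore_initial_segment)
    qed
    finally show ?thesis .
  qed
  have "(\<lambda>N. H N * U N) \<longlonglongrightarrow> 0"
  proof (rule tendsto_sandwich[of "\<lambda>_. 0" _ _ "\<lambda>N. \<Sum>k. v (k + N)"])
    show "\<forall>\<^sub>F n in sequentially. 0 \<le> H n * U n" using H0 U0 by (simp add: mult_nonneg_nonneg)
    show "\<forall>\<^sub>F n in sequentially. H n * U n \<le> (\<Sum>k. v (k + n))" using le by simp
    show "(\<lambda>N. \<Sum>k. v (k + N)) \<longlonglongrightarrow> 0" using sv by (rule suminf_exist_split2)
  qed simp
  then show ?thesis unfolding H_def .
qed

lemma abel_lemma:
  fixes d U :: "nat \<Rightarrow> real"
  assumes sgn: "\<And>i. i \<ge> M \<Longrightarrow> 0 \<le> s * d i" and s: "s = 1 \<or> s = -1"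
    and U0: "\<And>i. 0 \<le> U i" and Ud: "\<And>i. U (Suc i) \<le> U i"
    and Ulim: "U \<longlonglongrightarrow> 0" and sm: "summable (\<lambda>i. d i * U i)"
  shows "(\<lambda>k. (\<Sum>i\<le>k. d i) * (U k - U (Suc k))) sums (\<Sum>i. d i * U i)"
proof -
  define d1 where "d1 i = (if i < M then d i else 0)" for i
  define d2 where "d2 i = (if i < M then 0 else s * d i)" for i
  have dd: "d i = d1 i + s * d2 i" for i using s by (auto simp: d1_def d2_def)
  have d20: "0 \<le> d2 i" for i using sgn by (auto simp: d2_def)
  have sm1: "summable (\<lambda>i. d1 i * U i)"
    by (rule summable_finite[of "{..<M}"]) (auto simp: d1_def)
  have "summable (\<lambda>i. s * (d i * U i - d1 i * U i))"
    by (intro summable_mult summable_diff sm sm1)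
  also have "(\<lambda>i. s * (d i * U i - d1 i * U i)) = (\<lambda>i. d2 i * U i)"
    using s by (auto simp: d1_def d2_def fun_eq_iff)
  finally have sm2: "summable (\<lambda>i. d2 i * U i)" .
  have t2: "(\<lambda>N. (\<Sum>i<N. d2 i) * U N) \<longlonglongrightarrow> 0"
    by (rule abel_nonneg_part[OF d20 U0 Ud Ulim sm2])
  have t1: "(\<lambda>N. (\<Sum>i<N. d1 i) * U N) \<longlonglongrightarrow> 0"
  proof -
    have h: "(\<Sum>i<M. d1 i) * U N = (\<Sum>i<N. d1 i) * U N" if "N \<ge> M" for N
      using that by (subst sum.mono_neutral_right[of "{..<N}" "{..<M}"]) (auto simp: d1_def)
    then have ev: "\<forall>\<^sub>F N in sequentially. (\<Sum>i<M. d1 i) * U N = (\<Sum>i<N. d1 i) * U N"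
      using h by (simp add: eventually_sequentially) blast
    show ?thesis using tendsto_mult_right_zero[OF Ulim, of "\<Sum>i<M. d1 i"] ev
      by (rule Lim_transform_eventually)
  qed
  have "(\<lambda>N. (\<Sum>i<N. d i) * U N) \<longlonglongrightarrow> 0 + s * 0"
    unfolding dd sum.distrib sum_distrib_left[symmetric] distrib_right mult.assoc
    by (intro tendsto_add t1 tendsto_mult t2 tendsto_const)
  then have t: "(\<lambda>N. (\<Sum>i<N. d i) * U N) \<longlonglongrightarrow> 0" by simp
  have "(\<lambda>N. (\<Sum>i<N. d i * U i) - (\<Sum>i<N. d i) * U N) \<longlonglongrightarrow> (\<Sum>i. d i * U i) - 0"
    by (intro tendsto_diff summable_LIMSEQ sm t)
  then show ?thesis
    unfolding sums_def abel_partial[symmetric] lessThan_Suc_atMost by simp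
qed


lemma harm_contra:
  fixes f :: "nat \<Rightarrow> real"
  assumes "summable f" "L > 0" "\<And>i. i \<ge> K \<Longrightarrow> L / real (Suc i) \<le> f i"
  shows False
proof -
  have "summable (\<lambda>i. f i / L)" using assms(1) by (rule summable_divide)
  then have "summable (\<lambda>i. inverse (real (Suc i)))"
  proof (rule summable_comparison_test'[where N = K])
    fix n assume "n \<ge> K"
    with assms(3)[of n] assms(2) show "norm (inverse (real (Suc n))) \<le> f n / L"
      by (simp add: field_simps)
  qed
  then have "summable (\<lambda>i. inverse (real i))"
    using summable_Suc_iff[of "\<lambda>i. inverse (real i)"] by simp
  then show False using not_summable_harmonic by blast
qed

lemma F0_sums:
  assumes lam0: "lam \<noteq> 0" and lam1: "lam \<noteq> -1"
    and sm: "summable (\<lambda>i. dcoeff lam (Suc i) / real (Suc i) ^ 2)"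
  shows "(\<lambda>i. dcoeff lam (Suc i) / (real (Suc i) * real (Suc i + 1))) sums (1 / (lam + 1))"
proof -
  define A where "A i = dcoeff lam (Suc i)" for i
  define b where "b N = A N / real (Suc N)" for N
  have Arec: "A (Suc i) = A i * (real i + 1 - lam) / (real i + 1)" for i
    unfolding A_def by (rule dcoeff_rec[OF lam0])
  have A0: "A 0 = 1" unfolding A_def by (rule dcoeff_1)
  have brec: "b (Suc N) = b N * (real N + 1 - lam) / (real N + 2)" for N
    unfolding b_def Arec by (simp add: field_simps)
  have part: "(\<Sum>i<N. A i / (real (Suc i) * real (Suc i + 1))) = (1 - b N) / (1 + lam)" for N
  proof (induction N)
    case 0 then show ?case by (simp add: b_def A0)
  next
    case (Suc N)
    have l: "1 + lam \<noteq> 0" using lam1 by auto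
    have "b N - b (Suc N) = b N * (1 + lam) / (real N + 2)"
      unfolding brec by (simp add: field_simps)
    then have "(b N - b (Suc N)) / (1 + lam) = b N / (real N + 2)"
      using l by simp
    also have "\<dots> = A N / (real (Suc N) * real (Suc N + 1))"
      unfolding b_def by (simp add: field_simps)
    finally have e: "A N / (real (Suc N) * real (Suc N + 1)) = (b N - b (Suc N)) / (1 + lam)" ..
    show ?case unfolding sum.lessThan_Suc Suc e using l by (simp add: field_simps)
  qed
  have sm': "summable (\<lambda>i. b i / real (Suc i))"
    using sm unfolding b_def A_def by (simp add: power2_eq_square)
  have blim: "b \<longlonglongrightarrow> 0"
  proof (cases "lam < -1")
    case True
    have Apos: "A i > 0" for i
    proof (induction i)
      case 0 then show ?case by (simp add: A0)
    next
      case (Suc i)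
      have "(real i + 1 - lam) / (real i + 1) > 0" using True by simp
      then show ?case using Suc unfolding Arec by (metis mult_pos_pos times_divide_eq_right)
    qed
    have "b N \<ge> 1" for N
    proof (induction N)
      case 0 then show ?case by (simp add: b_def A0)
    next
      case (Suc N)
      have "b N > 0" using Apos[of N] by (simp add: b_def)
      have "(real N + 1 - lam) / (real N + 2) \<ge> 1" using True by simp
      then have "b N * 1 \<le> b N * ((real N + 1 - lam) / (real N + 2))"
        using \<open>b N > 0\<close> by (intro mult_left_mono) auto
      then show ?case using Suc unfolding brec by (simp only: mult_1_right times_divide_eq_right)
    qed
    then have False
      by (intro harm_contra[OF sm', of 1 0]) (auto simp: divide_right_mono)
    then show ?thesis ..
  next
    case False
    then have lamg: "lam > -1" using lam1 by auto
    obtain M and s :: real where s: "s = 1 \<or> s = -1" and sg0: "\<And>i. i \<ge> M \<Longrightarrow> 0 \<le> s * dcoeff lam (Suc i)"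
      and Ml: "lam \<le> real M"
      using dcoeff_sign[OF lam0] by metis
    have sg: "\<And>i. i \<ge> M \<Longrightarrow> 0 \<le> s * A i" using sg0 unfolding A_def .
    define c where "c N = s * b (N + M)" for N
    have c0: "0 \<le> c N" for N using sg[of "N + M"] unfolding c_def b_def
      by (simp add: mult_nonneg_nonneg)
    have "decseq c"
    proof (rule decseq_SucI)
      fix N
      have r0: "0 \<le> (real (N + M) + 1 - lam) / (real (N + M) + 2)" using Ml by simp
      have r1: "(real (N + M) + 1 - lam) / (real (N + M) + 2) \<le> 1" using lamg by simp
      have "c (Suc N) = c N * ((real (N + M) + 1 - lam) / (real (N + M) + 2))"
        unfolding c_def using brec[of "N + M"] by simp
      also have "\<dots> \<le> c N * 1" using c0[of N] r1 by (intro mult_left_mono) auto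
      finally show "c (Suc N) \<le> c N" by simp
    qed
    then obtain L where cL: "c \<longlonglongrightarrow> L" and Lc: "\<And>i. L \<le> c i"
      using decseq_convergent[of c 0] c0 by blast
    have "L \<ge> 0" using cL c0 by (intro LIMSEQ_le_const[OF cL]) auto
    show ?thesis
    proof (cases "L = 0")
      case True
      have "(\<lambda>N. s * c N) \<longlonglongrightarrow> s * 0" using cL True by (intro tendsto_mult tendsto_const) auto
      moreover have "s * c N = b (N + M)" for N using s unfolding c_def by auto
      ultimately have "(\<lambda>N. b (N + M)) \<longlonglongrightarrow> 0" by simp
      then show ?thesis by (rule LIMSEQ_offset)
    next
      case False
      have "s * (b i / real (Suc i)) \<ge> L / real (Suc i)" if "i \<ge> M" for i
      proof -
        have "L \<le> s * b i" using Lc[of "i - M"] that unfolding c_def by simp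
        then show ?thesis by (simp add: divide_right_mono)
      qed
      then have False using \<open>L \<ge> 0\<close> False
        by (intro harm_contra[OF summable_mult[OF sm', of s], of L M]) auto
      then show ?thesis ..
    qed
  qed
  have "(\<lambda>N. (1 - b N) / (1 + lam)) \<longlonglongrightarrow> (1 - 0) / (1 + lam)"
    by (intro tendsto_divide tendsto_diff blim tendsto_const) (use lam1 in auto)
  then show ?thesis unfolding sums_def A_def[symmetric] part by (simp add: add.commute)
qed


lemma deg_H_eq:
  "deg_H (Suc k) (int p) lam = (\<Sum>i\<le>k. dcoeff lam (Suc i) / real (Suc i) ^ p)"
proof -
  have "deg_H (Suc k) (int p) lam = (\<Sum>i=0..k. (- lam) ^ i * gen_fall 1 (Suc i) (1 / lam)
                                / (real (Suc i) powi int p * fact i))"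
    unfolding deg_H_def One_nat_def sum.shift_bounds_cl_Suc_ivl by simp
  also have "\<dots> = (\<Sum>i\<le>k. dcoeff lam (Suc i) / real (Suc i) ^ p)"
    unfolding atLeast0AtMost
    by (intro sum.cong refl) (simp add: dcoeff_def power_int_of_nat power_minus[of lam] field_simps)
  finally show ?thesis .
qed

lemma zeta_eq: "deg_zeta lam (real N) = (\<Sum>i. dcoeff lam (Suc i) / real (Suc i) ^ N)"
  unfolding deg_zeta_def by (simp add: powr_realpow)

lemma aux_frac0:
  fixes y a z :: real
  assumes "y > 0" "z > 0"
  shows "a / (z * y) - a / (z * (y + 1)) = a / (z * y * (y + 1))"
proof -
  have "y + 1 > 0" using assms by simp
  then show ?thesis using assms by (simp add: divide_simps) (simp add: algebra_simps)
qed

lemma aux_U: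
  fixes x H :: real
  assumes "x > 0"
  shows "H * (1 / (2 * x * (x + 1)) - 1 / (2 * (x + 1) * (x + 1 + 1))) = H / (x * (x + 1) * (x + 2))"
proof -
  have "x + 1 > 0" "x + 2 > 0" using assms by auto
  then show ?thesis using assms by (simp add: divide_simps) (simp add: algebra_simps)
qed

lemma aux_frac:
  fixes y a :: real
  assumes "y > 0"
  shows "a / y ^ (p + 2) - a / (y ^ Suc p * (y + 1)) = a / (y ^ Suc (Suc p) * (y + 1))"
proof -
  have "y ^ (p + 2) = y ^ Suc p * y" by simp
  moreover have "y ^ Suc (Suc p) = y ^ Suc p * y" by simp
  moreover have pos: "y ^ Suc p > 0" using assms by simp
  ultimately show ?thesis using aux_frac0[OF assms pos, of a] by (simp add: mult_ac)
qed

lemma part1_series: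
  assumes lam0: "lam \<noteq> 0" and lam1: "lam \<noteq> -1"
    and sm2: "summable (\<lambda>i. dcoeff lam (Suc i) / real (Suc i) ^ 2)"
  shows "(\<forall>m::nat\<in>{2..p+1}. summable (\<lambda>i. dcoeff lam (Suc i) / real (Suc i) ^ m)) \<longrightarrow>
    (\<lambda>i. dcoeff lam (Suc i) / (real (Suc i) ^ Suc p * real (Suc i + 1))) sums
      ((\<Sum>k=1..p. (-1) ^ (k - 1) * deg_zeta lam (real (p + 2 - k))) + (-1) ^ p / (lam + 1))"
proof (induction p)
  case 0
  show ?case using F0_sums[OF lam0 lam1 sm2] by simp
next
  case (Suc p)
  show ?case
  proof
    assume h: "\<forall>m::nat\<in>{2..Suc p+1}. summable (\<lambda>i. dcoeff lam (Suc i) / real (Suc i) ^ m)"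
    define A where "A i = dcoeff lam (Suc i)" for i
    define Z where "Z = (\<Sum>k=1..p. (-1) ^ (k - 1) * deg_zeta lam (real (p + 2 - k))) + (-1) ^ p / (lam + 1)"
    have IH: "(\<lambda>i. A i / (real (Suc i) ^ Suc p * real (Suc i + 1))) sums Z"
      using Suc h unfolding A_def Z_def by auto
    have "p + 2 \<in> {2..Suc p + 1}" by simp
    then have s2: "summable (\<lambda>i. A i / real (Suc i) ^ (p + 2))" using h unfolding A_def by blast
    have "(\<lambda>i. A i / real (Suc i) ^ (p + 2) - A i / (real (Suc i) ^ Suc p * real (Suc i + 1)))
        sums (deg_zeta lam (real (p + 2)) - Z)"
      unfolding zeta_eq A_def[symmetric] by (intro sums_diff IH summable_sums s2)
    moreover have "A i / real (Suc i) ^ (p + 2) - A i / (real (Suc i) ^ Suc p * real (Suc i + 1))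
        = A i / (real (Suc i) ^ Suc (Suc p) * real (Suc i + 1))" for i
      using aux_frac[of "real (Suc i)" "A i" p] by simp
    moreover have "deg_zeta lam (real (p + 2)) - Z =
      (\<Sum>k=1..Suc p. (-1) ^ (k - 1) * deg_zeta lam (real (Suc p + 2 - k))) + (-1) ^ Suc p / (lam + 1)"
    proof -
      have "(\<Sum>k=1..Suc p. (-1) ^ (k - 1) * deg_zeta lam (real (Suc p + 2 - k)))
          = deg_zeta lam (real (p + 2)) + (\<Sum>k=Suc 1..Suc p. (-1) ^ (k - 1) * deg_zeta lam (real (Suc p + 2 - k)))"
        by (subst sum.atLeast_Suc_atMost) auto
      also have "(\<Sum>k=Suc 1..Suc p. (-1) ^ (k - 1) * deg_zeta lam (real (Suc p + 2 - k)))
          = (\<Sum>k=1..p. (-1) ^ k * deg_zeta lam (real (p + 2 - k)))"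
        by (subst sum.shift_bounds_cl_Suc_ivl) simp
      also have "\<dots> = - (\<Sum>k=1..p. (-1) ^ (k - 1) * deg_zeta lam (real (p + 2 - k)))"
        unfolding sum_negf[symmetric] by (intro sum.cong refl) (auto simp: power_eq_if)
      finally show ?thesis unfolding Z_def by simp
    qed
    ultimately show "(\<lambda>i. dcoeff lam (Suc i) / (real (Suc i) ^ Suc (Suc p) * real (Suc i + 1))) sums
      ((\<Sum>k=1..Suc p. (-1) ^ (k - 1) * deg_zeta lam (real (Suc p + 2 - k))) + (-1) ^ Suc p / (lam + 1))"
      unfolding A_def by simp
  qed
qed

lemma part1:
  assumes lam0: "lam \<noteq> 0" and p1: "p \<ge> 1" and lam1: "lam \<noteq> -1"
    and h: "\<forall>m::nat\<in>{2..p+1}. summable (\<lambda>i. dcoeff lam (Suc i) / real (Suc i) powr real m)"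
  shows "(\<lambda>i. deg_H (Suc i) (int p) lam / (real (Suc i) * real (Suc i + 1) * real (Suc i + 2)))
          sums ((1/2) * ((\<Sum>k=1..p. (-1) ^ (k - 1) * deg_zeta lam (real (p + 2 - k)))
                         + (-1) ^ p / (lam + 1)))"
proof -
  have h': "\<forall>m::nat\<in>{2..p+1}. summable (\<lambda>i. dcoeff lam (Suc i) / real (Suc i) ^ m)"
    using h by (simp add: powr_realpow)
  then have sm2: "summable (\<lambda>i. dcoeff lam (Suc i) / real (Suc i) ^ 2)" using p1 by auto
  define Z where "Z = (\<Sum>k=1..p. (-1) ^ (k - 1) * deg_zeta lam (real (p + 2 - k))) + (-1) ^ p / (lam + 1)"
  have S: "(\<lambda>i. dcoeff lam (Suc i) / (real (Suc i) ^ Suc p * real (Suc i + 1))) sums Z"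
    using part1_series[OF lam0 lam1 sm2, of p] h' unfolding Z_def by blast
  define d where "d i = dcoeff lam (Suc i) / real (Suc i) ^ p" for i
  define U where "U i = 1 / (2 * real (Suc i) * real (Suc i + 1))" for i
  obtain M and s :: real where s: "s = 1 \<or> s = -1" and sg: "\<And>i. i \<ge> M \<Longrightarrow> 0 \<le> s * dcoeff lam (Suc i)"
    and "lam \<le> real M"
    using dcoeff_sign[OF lam0] by metis
  have sgd: "0 \<le> s * d i" if "i \<ge> M" for i
    using sg[OF that] unfolding d_def by (simp add: mult_nonneg_nonneg divide_nonneg_pos)
  have dU: "d i * U i = (1/2) * (dcoeff lam (Suc i) / (real (Suc i) ^ Suc p * real (Suc i + 1)))" for i
    unfolding d_def U_def by (simp add: field_simps)
  have S2: "(\<lambda>i. d i * U i) sums ((1/2) * Z)" unfolding dU by (intro sums_mult S)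
  have U0: "0 \<le> U i" for i unfolding U_def by simp
  have Ud: "U (Suc i) \<le> U i" for i
  proof -
    have "2 * real (Suc i) * real (Suc i + 1) \<le> 2 * real (Suc (Suc i)) * real (Suc (Suc i) + 1)"
      by (intro mult_mono) auto
    then show ?thesis unfolding U_def by (intro divide_left_mono) auto
  qed
  have Ulim: "U \<longlonglongrightarrow> 0"
  proof (rule tendsto_sandwich[of "\<lambda>_. 0" _ _ "\<lambda>i. inverse (real (Suc i))"])
    show "\<forall>\<^sub>F n in sequentially. 0 \<le> U n" using U0 by simp
    have "U n \<le> inverse (real (Suc n))" for n
    proof -
      have "real (Suc n) * 1 \<le> real (Suc n) * (2 * real (Suc n + 1))"
        by (intro mult_left_mono) auto
      then have h: "real (Suc n) \<le> 2 * real (Suc n) * real (Suc n + 1)"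
        by (simp add: algebra_simps)
      show ?thesis unfolding U_def inverse_eq_divide
        by (rule divide_left_mono[OF h]) auto
    qed
    then show "\<forall>\<^sub>F n in sequentially. U n \<le> inverse (real (Suc n))" by simp
    show "(\<lambda>i. inverse (real (Suc i))) \<longlonglongrightarrow> 0"
      using LIMSEQ_inverse_real_of_nat by simp
  qed simp
  have main: "(\<lambda>k. (\<Sum>i\<le>k. d i) * (U k - U (Suc k))) sums (\<Sum>i. d i * U i)"
    by (rule abel_lemma[OF sgd s U0 Ud Ulim sums_summable[OF S2]])
  have su: "(\<Sum>i. d i * U i) = (1/2) * Z" using S2 by (simp add: sums_iff)
  have eqs: "(\<Sum>i\<le>k. d i) * (U k - U (Suc k)) =
      deg_H (Suc k) (int p) lam / (real (Suc k) * real (Suc k + 1) * real (Suc k + 2))" for k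
    unfolding deg_H_eq d_def U_def using aux_U[of "real (Suc k)" "\<Sum>i\<le>k. dcoeff lam (Suc i) / real (Suc i) ^ p"]
    by (simp add: add.commute add.left_commute)
  show ?thesis using main unfolding eqs su Z_def .
qed


lemma aux_ratio:
  fixes P Q y a lam x X :: real
  assumes "P > 0" "Q > 0" "y > 0"
  shows "a * (y - lam) / y / Q * (x * X) = a / P * X * ((y - lam) / y * (P / Q) * x)"
  using assms by (simp add: field_simps)

lemma Li_summable:
  assumes lam0: "lam \<noteq> 0" and x0: "0 \<le> x" and x1: "x < 1"
  shows "summable (\<lambda>m. dcoeff lam (Suc m) / real (Suc m) ^ q * x ^ Suc m)"
proof (cases "x = 0")
  case True then show ?thesis by simp
next
  case False
  then have xpos: "x > 0" using x0 by simp
  define A where "A m = dcoeff lam (Suc m)" for m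
  define f where "f m = A m / real (Suc m) ^ q * x ^ Suc m" for m
  define c where "c = (1 + x) / 2"
  define N where "N = nat \<lceil>2 * \<bar>lam\<bar> / (1 - x)\<rceil>"
  have "c < 1" using x1 by (simp add: c_def)
  have step: "norm (f (Suc m)) \<le> c * norm (f m)" if "m \<ge> N" for m
  proof -
    have Arec: "A (Suc m) = A m * (real m + 1 - lam) / (real m + 1)"
      unfolding A_def by (rule dcoeff_rec[OF lam0])
    define r where "r = (real m + 1 - lam) / (real m + 1) * (real (Suc m) / real (Suc (Suc m))) ^ q * x"
    have eq: "f (Suc m) = f m * r"
      unfolding f_def Arec r_def power_divide
      using aux_ratio[of "real (Suc m) ^ q" "real (Suc (Suc m)) ^ q" "real m + 1" "A m" lam x "x ^ Suc m"]
      by simp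
    have r1: "\<bar>real m + 1 - lam\<bar> / (real m + 1) \<le> 1 + \<bar>lam\<bar> / (real m + 1)"
    proof -
      have "\<bar>real m + 1 - lam\<bar> \<le> (real m + 1) + \<bar>lam\<bar>" by linarith
      then have "\<bar>real m + 1 - lam\<bar> / (real m + 1) \<le> ((real m + 1) + \<bar>lam\<bar>) / (real m + 1)"
        by (intro divide_right_mono) auto
      also have "\<dots> = 1 + \<bar>lam\<bar> / (real m + 1)" by (simp add: add_divide_distrib)
      finally show ?thesis .
    qed
    have r2: "\<bar>lam\<bar> / (real m + 1) \<le> (1 - x) / 2"
    proof -
      have "2 * \<bar>lam\<bar> / (1 - x) \<le> real N" unfolding N_def by linarith
      also have "\<dots> \<le> real m + 1" using that by simp
      finally have "2 * \<bar>lam\<bar> \<le> (real m + 1) * (1 - x)" using x1 by (simp add: divide_simps)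
      then show ?thesis by (simp add: divide_simps mult.commute)
    qed
    have r3: "\<bar>(real (Suc m) / real (Suc (Suc m))) ^ q\<bar> \<le> 1"
      by (simp add: power_le_one)
    have "\<bar>r\<bar> \<le> (1 + \<bar>lam\<bar> / (real m + 1)) * 1 * x"
      unfolding r_def abs_mult using xpos r1 r3
      by (intro mult_mono) (auto simp: abs_divide)
    also have "\<dots> \<le> x + \<bar>lam\<bar> / (real m + 1)"
    proof -
      have "x * (\<bar>lam\<bar> / (real m + 1)) \<le> 1 * (\<bar>lam\<bar> / (real m + 1))"
        using x1 by (intro mult_right_mono) auto
      then show ?thesis by (simp add: algebra_simps)
    qed
    also have "\<dots> \<le> c" using r2 unfolding c_def by simp
    finally have "\<bar>r\<bar> \<le> c" .
    then have "\<bar>r\<bar> * \<bar>f m\<bar> \<le> c * \<bar>f m\<bar>" by (intro mult_right_mono) auto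
    then show ?thesis unfolding eq norm_mult real_norm_def abs_mult by (simp add: mult.commute)
  qed
  have "summable f" by (rule summable_ratio_test[of c N f]) (use \<open>c < 1\<close> step in auto)
  then show ?thesis unfolding f_def A_def .
qed


lemma power_has_integral01: "((\<lambda>x::real. x ^ n) has_integral (1 / real (Suc n))) {0..1}"
proof -
  have "((\<lambda>x::real. x ^ n) has_integral ((\<lambda>x. x ^ Suc n / real (Suc n)) 1 - (\<lambda>x. x ^ Suc n / real (Suc n)) 0)) {0..1}"
  proof (rule fundamental_theorem_of_calculus)
    fix x :: real
    have "((\<lambda>x. x ^ Suc n / real (Suc n)) has_real_derivative x ^ n) (at x within {0..1})"
      by (rule derivative_eq_intros refl | simp)+
    then show "((\<lambda>x. x ^ Suc n / real (Suc n)) has_vector_derivative x ^ n) (at x within {0..1})"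
      by (simp add: has_real_derivative_iff_has_vector_derivative)
  qed simp
  then show ?thesis by simp
qed

lemma Li_int_sums:
  assumes lam0: "lam \<noteq> 0" and int: "(\<lambda>x. x ^ j * deg_Li (int q) lam x) integrable_on {0..1}"
  shows "(\<lambda>m. dcoeff lam (Suc m) / real (Suc m) ^ q / real (m + j + 2))
           sums integral {0..1} (\<lambda>x. x ^ j * deg_Li (int q) lam x)"
proof -
  define A where "A m = dcoeff lam (Suc m)" for m
  define t where "t m x = A m / real (Suc m) ^ q * x ^ Suc m" for m and x :: real
  define g where "g x = x ^ j * deg_Li (int q) lam x" for x
  have Li: "deg_Li (int q) lam x = (\<Sum>m. t m x)" for x
    unfolding deg_Li_def t_def A_def by (simp add: power_int_of_nat)
  obtain M and s :: real where s: "s = 1 \<or> s = -1" and sg0: "\<And>i. i \<ge> M \<Longrightarrow> 0 \<le> s * dcoeff lam (Suc i)"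
    and "lam \<le> real M"
    using dcoeff_sign[OF lam0] by metis
  have ss: "s * s = 1" using s by auto
  define S where "S = {0<..<(1::real)}"
  define f where "f k x = s * (x ^ j * (\<Sum>m<k+M. t m x))" for k x
  define a where "a m = A m / real (Suc m) ^ q / real (m + j + 2)" for m
  have hi: "(f k has_integral (s * (\<Sum>m<k+M. a m))) {0..1}" for k
  proof -
    have "((\<lambda>x. \<Sum>m<k+M. x ^ j * t m x) has_integral (\<Sum>m<k+M. a m)) {0..1}"
    proof (rule has_integral_sum)
      fix m
      have "((\<lambda>x. x ^ (m + j + 1)) has_integral (1 / real (Suc (m + j + 1)))) {0..1}"
        by (rule power_has_integral01)
      then have "((\<lambda>x. A m / real (Suc m) ^ q * x ^ (m + j + 1)) has_integral
          (A m / real (Suc m) ^ q * (1 / real (Suc (m + j + 1))))) {0..1}"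
        by (rule has_integral_mult_right)
      moreover have "(\<lambda>x. x ^ j * t m x) = (\<lambda>x. A m / real (Suc m) ^ q * x ^ (m + j + 1))"
        unfolding t_def by (simp add: power_add mult_ac fun_eq_iff)
      moreover have "A m / real (Suc m) ^ q * (1 / real (Suc (m + j + 1))) = a m"
        unfolding a_def by simp
      ultimately show "((\<lambda>x. x ^ j * t m x) has_integral a m) {0..1}" by simp
    qed simp
    then have "((\<lambda>x. s * (\<Sum>m<k+M. x ^ j * t m x)) has_integral (s * (\<Sum>m<k+M. a m))) {0..1}"
      by (rule has_integral_mult_right)
    then show ?thesis unfolding f_def sum_distrib_left .
  qed
  have hiS: "(f k has_integral (s * (\<Sum>m<k+M. a m))) S" for k
    using hi[of k] unfolding S_def by (simp add: has_integral_Icc_iff_Ioo)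
  have gS: "g integrable_on S" using int unfolding S_def g_def
    by (simp add: integrable_on_open_interval_real)
  have sgS: "(\<lambda>x. s * g x) integrable_on S" using gS by (rule integrable_on_mult_right)
  have intgS: "integral S (\<lambda>x. s * g x) = s * integral {0..1} g"
    using integral_mult[OF gS, of s] unfolding S_def integral_open_interval_real by simp
  have step: "f (Suc k) x = f k x + s * A (k + M) * (x ^ j * x ^ Suc (k + M) / real (Suc (k + M)) ^ q)" for k x
    unfolding f_def t_def by (simp add: algebra_simps)
  have mono: "f k x \<le> f (Suc k) x" if "x \<in> S" for k x
  proof -
    have "0 \<le> s * A (k + M)" unfolding A_def by (rule sg0) simp
    moreover have "0 \<le> x ^ j * x ^ Suc (k + M) / real (Suc (k + M)) ^ q" using that unfolding S_def by simp
    ultimately have "0 \<le> s * A (k + M) * (x ^ j * x ^ Suc (k + M) / real (Suc (k + M)) ^ q)"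
      by (rule mult_nonneg_nonneg)
    then show ?thesis unfolding step by linarith
  qed
  have conv: "(\<lambda>k. f k x) \<longlonglongrightarrow> s * g x" if "x \<in> S" for x
  proof -
    have "summable (\<lambda>m. t m x)" unfolding t_def A_def
      using Li_summable[OF lam0, of x q] that unfolding S_def by simp
    then have "(\<lambda>n. \<Sum>m<n. t m x) \<longlonglongrightarrow> (\<Sum>m. t m x)" by (rule summable_LIMSEQ)
    then have "(\<lambda>n. \<Sum>m<n + M. t m x) \<longlonglongrightarrow> (\<Sum>m. t m x)" by (rule LIMSEQ_ignore_initial_segment)
    then have "(\<lambda>n. s * (x ^ j * (\<Sum>m<n + M. t m x))) \<longlonglongrightarrow> s * (x ^ j * (\<Sum>m. t m x))"
      by (intro tendsto_mult tendsto_const)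
    then show ?thesis unfolding f_def g_def Li .
  qed
  have inc: "incseq (\<lambda>k. f k x)" if "x \<in> S" for x
    using mono[OF that] by (rule incseq_SucI)
  have fle: "f k x \<le> s * g x" if "x \<in> S" for k x
    by (rule incseq_le[OF inc[OF that] conv[OF that]])
  have f0le: "f 0 x \<le> f k x" if "x \<in> S" for k x
    using inc[OF that] by (simp add: incseq_def)
  have fint: "f k integrable_on S" for k using hiS[of k] by blast
  have bnd: "bounded (range (\<lambda>k. integral S (f k)))"
  proof -
    have lo: "integral S (f 0) \<le> integral S (f k)" for k
      by (rule integral_le[OF fint fint f0le])
    have hi2: "integral S (f k) \<le> integral S (\<lambda>x. s * g x)" for k
      by (rule integral_le[OF fint sgS fle])
    show ?thesis unfolding bounded_real
    proof (intro exI[of _ "\<bar>integral S (f 0)\<bar> + \<bar>integral S (\<lambda>x. s * g x)\<bar>"] ballI)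
      fix y assume "y \<in> range (\<lambda>k. integral S (f k))"
      then obtain k where "y = integral S (f k)" by blast
      then show "\<bar>y\<bar> \<le> \<bar>integral S (f 0)\<bar> + \<bar>integral S (\<lambda>x. s * g x)\<bar>"
        using lo[of k] hi2[of k] by linarith
    qed
  qed
  have "(\<lambda>k. integral S (f k)) \<longlonglongrightarrow> integral S (\<lambda>x. s * g x)"
    using monotone_convergence_increasing[OF fint mono conv bnd] by blast
  moreover have "integral S (f k) = s * (\<Sum>m<k+M. a m)" for k using hiS[of k] by (rule integral_unique)
  ultimately have "(\<lambda>k. s * (\<Sum>m<k+M. a m)) \<longlonglongrightarrow> s * integral {0..1} g" unfolding intgS by simp
  then have "(\<lambda>k. s * (s * (\<Sum>m<k+M. a m))) \<longlonglongrightarrow> s * (s * integral {0..1} g)"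
    by (rule tendsto_mult[OF tendsto_const])
  moreover have "s * (s * y) = y" for y using ss by (simp add: mult.assoc[symmetric])
  ultimately have "(\<lambda>k. (\<Sum>m<k+M. a m)) \<longlonglongrightarrow> integral {0..1} g"
    by simp
  then have "(\<lambda>n. \<Sum>m<n. a m) \<longlonglongrightarrow> integral {0..1} g" by (rule LIMSEQ_offset)
  then show ?thesis unfolding sums_def a_def A_def g_def .
qed


definition gs :: "nat \<Rightarrow> nat \<Rightarrow> real" where
  "gs k m = (\<Sum>j\<le>k. real (k choose j) * (-1) ^ j / real (m + j + 1))"

lemma aux_lin:
  fixes a b e D :: real
  shows "(a + b) * (- 1 * e) / D = b * (- 1 * e) / D - a * e / D"
  by (cases "D = 0") (simp_all add: field_simps)

lemma aux_EF:
  fixes x c E F :: real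
  assumes "E > 0" "F > 0"
  shows "x / F - x * c / (E * F) = (E - c) * x / (E * F)"
  using assms by (simp add: field_simps)

lemma gs_rec: "gs (Suc k) m = gs k m - gs k (Suc m)"
proof -
  define h where "h j = real (k choose j) * (-1) ^ j / real (m + j + 1)" for j
  have "gs (Suc k) m = 1 / real (m + 1) +
      (\<Sum>j\<le>k. real (Suc k choose Suc j) * (-1) ^ Suc j / real (m + Suc j + 1))"
    unfolding gs_def by (subst sum.atMost_Suc_shift) simp
  also have "(\<Sum>j\<le>k. real (Suc k choose Suc j) * (-1) ^ Suc j / real (m + Suc j + 1))
      = (\<Sum>j\<le>k. h (Suc j)) - gs k (Suc m)"
    unfolding gs_def h_def sum_subtractf[symmetric]
  proof (intro sum.cong refl)
    fix j
    have e1: "real (m + Suc j + 1) = real (m + j + 2)" "real (Suc m + j + 1) = real (m + j + 2)" by simp_all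
    show "real (Suc k choose Suc j) * (-1) ^ Suc j / real (m + Suc j + 1) =
      real (k choose Suc j) * (-1) ^ Suc j / real (m + Suc j + 1) - real (k choose j) * (-1) ^ j / real (Suc m + j + 1)"
      unfolding e1 binomial_Suc_Suc of_nat_add power_Suc
      using aux_lin[of "real (k choose j)" "real (k choose Suc j)" "(-1)^j" "real (m + j + 2)"] by simp
  qed
  also have "(\<Sum>j\<le>k. h (Suc j)) = gs k m - 1 / real (m + 1)"
  proof -
    have "(\<Sum>j\<le>Suc k. h j) = h 0 + (\<Sum>j\<le>k. h (Suc j))" by (rule sum.atMost_Suc_shift)
    moreover have "(\<Sum>j\<le>Suc k. h j) = gs k m" unfolding gs_def h_def by simp
    moreover have "h 0 = 1 / real (m + 1)" unfolding h_def by simp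
    ultimately show ?thesis by simp
  qed
  finally show ?thesis by simp
qed

lemma gs_closed: "gs k m = fact k * fact m / fact (m + k + 1)"
proof (induction k arbitrary: m)
  case 0
  have "fact (m + 0 + 1) = real (m + 1) * (fact m :: real)" by simp
  moreover have "1 / real (m + 1) = fact m / (real (m + 1) * fact m)" by simp
  ultimately show ?case unfolding gs_def by simp
next
  case (Suc k)
  have f1: "fact (Suc m + k + 1) = real (m + k + 2) * (fact (m + k + 1) :: real)"
    by (simp add: algebra_simps)
  have f2: "fact (m + Suc k + 1) = real (m + k + 2) * (fact (m + k + 1) :: real)"
    by (simp add: algebra_simps)
  have f3: "fact (Suc m) = real (m + 1) * (fact m :: real)" by simp
  have f4: "fact (Suc k) = real (k + 1) * (fact k :: real)" by simp
  have pos: "(fact (m + k + 1) :: real) > 0" by simp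
  have E: "real (m + k + 2) > 0" by simp
  have "gs (Suc k) m = fact k * fact m / fact (m + k + 1) -
      fact k * fact m * real (m + 1) / (real (m + k + 2) * fact (m + k + 1))"
    unfolding gs_rec Suc f1 f3 by (simp add: mult_ac)
  also have "\<dots> = (real (m + k + 2) - real (m + 1)) * (fact k * fact m) / (real (m + k + 2) * fact (m + k + 1))"
    by (rule aux_EF[OF E pos])
  also have "real (m + k + 2) - real (m + 1) = real (k + 1)" by simp
  finally show ?case unfolding f2 f4 by (simp add: mult_ac)
qed


lemma aux_dU:
  fixes K a y P fk fi F :: real
  assumes "y > 0" "P > 0" "F > 0"
  shows "K * (a / (y * P) * (fk * (y * fi) / F)) = a / P * ((K * fk) * fi / F)"
  using assms by (simp add: field_simps)

lemma aux_Ud: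
  fixes a b c f F :: real
  assumes "0 \<le> a" "a \<le> b" "0 < b" "0 \<le> c" "0 \<le> f" "0 < F"
  shows "c * (a * f) / (b * F) \<le> c * f / F"
proof -
  have "c * (a * f) / (b * F) = (a / b) * (c * f / F)" using assms by (simp add: field_simps)
  also have "\<dots> \<le> 1 * (c * f / F)"
    using assms by (intro mult_right_mono) (auto simp: divide_le_eq_1)
  finally show ?thesis by simp
qed

lemma aux_CE:
  fixes a C E F :: real
  assumes "a > 0" "F > 0" "E > 0" "C = F / a"
  shows "a / (E * F) = 1 / (C * E)"
proof -
  show ?thesis unfolding assms(4) using assms(1-3) by (simp add: field_simps)
qed

lemma part2:
  assumes lam0: "lam \<noteq> 0" and n2: "n \<ge> 2" and p1: "p \<ge> 1"
    and hint: "\<forall>j\<le>n-2. (\<lambda>x. x ^ j * deg_Li (int p + 1) lam x) integrable_on {0..1}"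
  shows "(\<lambda>i. deg_H (Suc i) (int p) lam / (real ((Suc i + n - 1) choose n) * real (Suc i + n)))
          sums (real (n - 1) * (\<Sum>j=0..n-2. real ((n - 2) choose j) * (-1) ^ j
                                  * deg_I lam (j + 1) (int p + 1)))"
proof -
  define A where "A i = dcoeff lam (Suc i)" for i
  have ip: "int p + 1 = int (Suc p)" by simp
  have Ij: "(\<lambda>i. A i / real (Suc i) ^ Suc p / real (i + j + 2)) sums deg_I lam (j + 1) (int p + 1)"
    if "j \<le> n - 2" for j
    using Li_int_sums[OF lam0, of j "Suc p"] hint that unfolding deg_I_def ip A_def by simp
  define T where "T i = (\<Sum>j\<in>{0..n-2}. real ((n-2) choose j) * (-1)^j * (A i / real (Suc i) ^ Suc p / real (i + j + 2)))" for i
  have "T sums (\<Sum>j=0..n-2. real ((n - 2) choose j) * (-1) ^ j * deg_I lam (j + 1) (int p + 1))"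
    unfolding T_def by (intro sums_sum sums_mult Ij) auto
  then have S: "(\<lambda>i. real (n - 1) * T i) sums (real (n - 1) * (\<Sum>j=0..n-2. real ((n - 2) choose j) * (-1) ^ j * deg_I lam (j + 1) (int p + 1)))"
    by (rule sums_mult)
  obtain k where nk: "n = Suc (Suc k)" using n2 by (metis add_2_eq_Suc le_Suc_ex)
  define d where "d i = A i / real (Suc i) ^ p" for i
  define U where "U i = fact (n - 1) * fact i / (fact (i + n) :: real)" for i
  have dU: "real (n - 1) * T i = d i * U i" for i
  proof -
    have "T i = A i / real (Suc i) ^ Suc p * gs k (Suc i)"
      unfolding T_def gs_def atLeast0AtMost sum_distrib_left nk
    proof (intro sum.cong refl)
      fix j
      have e: "Suc (Suc k) - 2 = k" "real (Suc i + j + 1) = real (i + j + 2)" by simp_all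
      show "real ((Suc (Suc k) - 2) choose j) * (-1) ^ j * (A i / real (Suc i) ^ Suc p / real (i + j + 2)) =
         A i / real (Suc i) ^ Suc p * (real (k choose j) * (-1) ^ j / real (Suc i + j + 1))"
        unfolding e by (simp add: mult_ac)
    qed simp
    also have "\<dots> = A i / (real (Suc i) * real (Suc i) ^ p) * (fact k * (real (Suc i) * fact i) / fact (i + Suc (Suc k)))"
      unfolding gs_closed by (simp add: add.commute add.left_commute)
    finally have "real (n - 1) * T i = real (Suc k) * (A i / (real (Suc i) * real (Suc i) ^ p) * (fact k * (real (Suc i) * fact i) / fact (i + Suc (Suc k))))"
      unfolding nk by simp
    also have "\<dots> = A i / real (Suc i) ^ p * ((real (Suc k) * fact k) * fact i / fact (i + Suc (Suc k)))"
      by (rule aux_dU) auto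
    also have "\<dots> = d i * U i" unfolding d_def U_def nk by simp
    finally show ?thesis .
  qed
  obtain M and s :: real where s: "s = 1 \<or> s = -1" and sg: "\<And>i. i \<ge> M \<Longrightarrow> 0 \<le> s * dcoeff lam (Suc i)"
    and "lam \<le> real M"
    using dcoeff_sign[OF lam0] by metis
  have sgd: "0 \<le> s * d i" if "i \<ge> M" for i
    using sg[OF that] unfolding d_def A_def by (simp add: mult_nonneg_nonneg divide_nonneg_pos)
  have U0: "0 \<le> U i" for i unfolding U_def by simp
  have Ud: "U (Suc i) \<le> U i" for i
  proof -
    have "U (Suc i) = fact (n - 1) * (real (Suc i) * fact i) / (real (Suc i + n) * fact (i + n))"
      unfolding U_def by simp
    also have "\<dots> \<le> fact (n - 1) * fact i / fact (i + n)"
      by (rule aux_Ud) auto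
    finally show ?thesis unfolding U_def .
  qed
  have Ulim: "U \<longlonglongrightarrow> 0"
  proof (rule tendsto_sandwich[of "\<lambda>_. 0" _ _ "\<lambda>i. fact (n - 1) * inverse (real (Suc i))"])
    show "\<forall>\<^sub>F i in sequentially. 0 \<le> U i" using U0 by simp
    have "U i \<le> fact (n - 1) * inverse (real (Suc i))" for i
    proof -
      have "fact (Suc i) \<le> (fact (i + n) :: real)" using n2 by (intro fact_mono) auto
      then have le: "real (Suc i) * fact i \<le> (fact (i + n) :: real)" by simp
      have "U i \<le> fact (n - 1) * fact i / (real (Suc i) * fact i)"
        unfolding U_def using le by (intro divide_left_mono) auto
      also have "\<dots> = fact (n - 1) / real (Suc i)"
        by (rule nonzero_mult_divide_mult_cancel_right) simp
      also have "\<dots> = fact (n - 1) * inverse (real (Suc i))" by (simp add: divide_inverse)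
      finally show ?thesis .
    qed
    then show "\<forall>\<^sub>F i in sequentially. U i \<le> fact (n - 1) * inverse (real (Suc i))" by simp
    show "(\<lambda>i. fact (n - 1) * inverse (real (Suc i))) \<longlonglongrightarrow> 0"
      using tendsto_mult_right_zero[OF LIMSEQ_inverse_real_of_nat, of "fact (n - 1)"] by simp
  qed simp
  have S2: "(\<lambda>i. d i * U i) sums (real (n - 1) * (\<Sum>j=0..n-2. real ((n - 2) choose j) * (-1) ^ j * deg_I lam (j + 1) (int p + 1)))"
    using S unfolding dU .
  have main: "(\<lambda>k. (\<Sum>i\<le>k. d i) * (U k - U (Suc k))) sums (\<Sum>i. d i * U i)"
    by (rule abel_lemma[OF sgd s U0 Ud Ulim sums_summable[OF S2]])
  have su: "(\<Sum>i. d i * U i) = real (n - 1) * (\<Sum>j=0..n-2. real ((n - 2) choose j) * (-1) ^ j * deg_I lam (j + 1) (int p + 1))"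
    using S2 by (simp add: sums_iff)
  have uu: "U i - U (Suc i) = 1 / (real ((Suc i + n - 1) choose n) * real (Suc i + n))" for i
  proof -
    have E: "real (i + n + 1) > 0" by simp
    have F: "(fact (i + n) :: real) > 0" by simp
    have "U i - U (Suc i) = fact (n - 1) * fact i / fact (i + n) -
        fact (n - 1) * fact i * real (i + 1) / (real (i + n + 1) * fact (i + n))"
      unfolding U_def by (simp add: mult_ac)
    also have "\<dots> = (real (i + n + 1) - real (i + 1)) * (fact (n - 1) * fact i) / (real (i + n + 1) * fact (i + n))"
      by (rule aux_EF[OF E F])
    also have "real (i + n + 1) - real (i + 1) = real n" by simp
    also have "real n * (fact (n - 1) * fact i) = (fact n * fact i :: real)"
      using n2 by (simp add: fact_reduce[of n])
    finally have l: "U i - U (Suc i) = fact n * fact i / (real (i + n + 1) * fact (i + n))" .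
    have "real ((Suc i + n - 1) choose n) = fact (i + n) / (fact n * fact i)"
      using binomial_fact[of n "i + n"] by simp
    moreover have "real (Suc i + n) = real (i + n + 1)" by simp
    moreover have "(fact n * fact i :: real) > 0" by simp
    ultimately show ?thesis unfolding l using aux_CE[OF _ F E] by simp
  qed
  have eqs: "(\<Sum>i\<le>k. d i) * (U k - U (Suc k)) =
      deg_H (Suc k) (int p) lam / (real ((Suc k + n - 1) choose n) * real (Suc k + n))" for k
    unfolding deg_H_eq d_def A_def uu by simp
  show ?thesis using main unfolding eqs su .
qed


theorem theorem2:
  fixes lam :: real
  assumes "lam \<noteq> 0"
  shows
   "(\<forall>p::nat. p \<ge> 1 \<longrightarrow> lam \<noteq> -1 \<longrightarrow>
       (\<forall>m::nat\<in>{2..p+1}. summable (\<lambda>i. dcoeff lam (Suc i) / real (Suc i) powr real m)) \<longrightarrow>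
       ((\<lambda>i. deg_H (Suc i) (int p) lam / (real (Suc i) * real (Suc i + 1) * real (Suc i + 2)))
          sums ((1/2) * ((\<Sum>k=1..p. (-1) ^ (k - 1) * deg_zeta lam (real (p + 2 - k)))
                         + (-1) ^ p / (lam + 1)))))
    \<and>
    (\<forall>n p::nat. n \<ge> 2 \<longrightarrow> p \<ge> 1 \<longrightarrow>
       (\<forall>j\<le>n-2. (\<lambda>x. x ^ j * deg_Li (int p + 1) lam x) integrable_on {0..1}) \<longrightarrow>
       ((\<lambda>i. deg_H (Suc i) (int p) lam / (real ((Suc i + n - 1) choose n) * real (Suc i + n)))
          sums (real (n - 1) * (\<Sum>j=0..n-2. real ((n - 2) choose j) * (-1) ^ j
                                  * deg_I lam (j + 1) (int p + 1)))))"
proof (intro conjI allI impI)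
  fix p :: nat
  assume "p \<ge> 1" "lam \<noteq> -1"
    "\<forall>m::nat\<in>{2..p+1}. summable (\<lambda>i. dcoeff lam (Suc i) / real (Suc i) powr real m)"
  then show "(\<lambda>i. deg_H (Suc i) (int p) lam / (real (Suc i) * real (Suc i + 1) * real (Suc i + 2)))
          sums ((1/2) * ((\<Sum>k=1..p. (-1) ^ (k - 1) * deg_zeta lam (real (p + 2 - k)))
                         + (-1) ^ p / (lam + 1)))"
    using part1[OF assms] by blast
next
  fix n p :: nat
  assume "n \<ge> 2" "p \<ge> 1"
    "\<forall>j\<le>n-2. (\<lambda>x. x ^ j * deg_Li (int p + 1) lam x) integrable_on {0..1}"
  then show "(\<lambda>i. deg_H (Suc i) (int p) lam / (real ((Suc i + n - 1) choose n) * real (Suc i + n)))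
          sums (real (n - 1) * (\<Sum>j=0..n-2. real ((n - 2) choose j) * (-1) ^ j
                                  * deg_I lam (j + 1) (int p + 1)))"
    using part2[OF assms] by blast
qed

end
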